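(* Let $\langle E,\rightarrow\rangle$ be a computation, $b$ a regular predicate, and $C$ a non-trivial consistent cut of $\langle E,\rightarrow\rangle$. Then $C$ satisfies $\neg b$ if and only if there exist events $e,f$ such that there is no path from $e$ to $f$ in $\langle E,\rightarrow\rangle$, there is a path from $e$ to $f$ in the slice of $\langle E,\rightarrow\rangle$ with respect to $b$, and $C$ satisfies $\mathrm{prevents}(f,e)$ (i.e., $f\in C$ and $e\notin C$).
   Context: A computation is a directed graph $\langle E, \rightarrow\rangle$ whose vertices (events) are partitioned among processes, each with an initial and a final event, whose path relation contains Lamport's happened-before relation, with all initial (resp. final) events in one strongly connected component. A vertex subset $C$ is a consistent cut if for every edge $(u,v)$, $v\in C$ implies $u\in C$; $\emptyset$ and $E$ are trivial. A predicate is evaluated on non-trivial consistent cuts and is regular if whenever consistent cuts $C_1,C_2$ satisfy it, so do $C_1\cap C_2$ and $C_1\cup C_2$. The slice with respect to $b$ is a directed graph on $E$ whose consistent cuts include every consistent cut of the computation satisfying $b$ and which has the fewest consistent cuts among all such graphs. *)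

theory Defs
  imports Main
begin

text \<open>Events are partitioned among processes P via proc; po is the process order
  (a strict total order on the events of each process), msg the set of
  (send, receive) pairs; Lamport's happened-before is (po \<union> msg)^+.\<close>

definition computation ::
  "'a set \<Rightarrow> ('a \<times> 'a) set \<Rightarrow> 'p set \<Rightarrow> ('a \<Rightarrow> 'p) \<Rightarrow> ('a \<times> 'a) set
     \<Rightarrow> ('a \<times> 'a) set \<Rightarrow> ('p \<Rightarrow> 'a) \<Rightarrow> ('p \<Rightarrow> 'a) \<Rightarrow> bool" where
  "computation E R P proc po msg init fin \<longleftrightarrow>
     finite E \<and> R \<subseteq> E \<times> E \<and>
     proc ` E = P \<and>
     po \<subseteq> {(e, f). e \<in> E \<and> f \<in> E \<and> proc e = proc f} \<and>
     (\<forall>p\<in>P. strict_linear_order_on {e \<in> E. proc e = p} po) \<and>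
     msg \<subseteq> E \<times> E \<and>
     (\<forall>p\<in>P. init p \<in> E \<and> proc (init p) = p \<and> fin p \<in> E \<and> proc (fin p) = p \<and>
        init p \<noteq> fin p \<and>
        (\<forall>e\<in>E. proc e = p \<longrightarrow> e \<noteq> init p \<longrightarrow> (init p, e) \<in> po) \<and>
        (\<forall>e\<in>E. proc e = p \<longrightarrow> e \<noteq> fin p \<longrightarrow> (e, fin p) \<in> po)) \<and>
     (po \<union> msg)\<^sup>+ \<subseteq> R\<^sup>+ \<and>
     (\<forall>p\<in>P. \<forall>q\<in>P. (init p, init q) \<in> R\<^sup>* \<and> (fin p, fin q) \<in> R\<^sup>*)"

definition consistent_cut :: "'a set \<Rightarrow> ('a \<times> 'a) set \<Rightarrow> 'a set \<Rightarrow> bool" where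
  "consistent_cut E R C \<longleftrightarrow> C \<subseteq> E \<and> (\<forall>(u, v) \<in> R. v \<in> C \<longrightarrow> u \<in> C)"

definition nontrivial_cut :: "'a set \<Rightarrow> 'a set \<Rightarrow> bool" where
  "nontrivial_cut E C \<longleftrightarrow> C \<noteq> {} \<and> C \<noteq> E"

definition cuts :: "'a set \<Rightarrow> ('a \<times> 'a) set \<Rightarrow> 'a set set" where
  "cuts E R = {C. consistent_cut E R C}"

definition satisfies :: "'a set \<Rightarrow> ('a \<times> 'a) set \<Rightarrow> ('a set \<Rightarrow> bool) \<Rightarrow> 'a set \<Rightarrow> bool" where
  "satisfies E R b C \<longleftrightarrow> consistent_cut E R C \<and> nontrivial_cut E C \<and> b C"

definition regular :: "'a set \<Rightarrow> ('a \<times> 'a) set \<Rightarrow> ('a set \<Rightarrow> bool) \<Rightarrow> bool" where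
  "regular E R b \<longleftrightarrow>
     (\<forall>C1 C2. satisfies E R b C1 \<and> satisfies E R b C2 \<longrightarrow>
        satisfies E R b (C1 \<inter> C2) \<and> satisfies E R b (C1 \<union> C2))"

definition is_slice :: "'a set \<Rightarrow> ('a \<times> 'a) set \<Rightarrow> ('a set \<Rightarrow> bool) \<Rightarrow> ('a \<times> 'a) set \<Rightarrow> bool" where
  "is_slice E R b S \<longleftrightarrow>
     S \<subseteq> E \<times> E \<and>
     (\<forall>C. satisfies E R b C \<longrightarrow> consistent_cut E S C) \<and>
     (\<forall>G. G \<subseteq> E \<times> E \<longrightarrow> (\<forall>C. satisfies E R b C \<longrightarrow> consistent_cut E G C) \<longrightarrow>
        card (cuts E S) \<le> card (cuts E G))"

end

theory Submission
  imports Defs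
begin

lemma L_closed:
  assumes reg: "regular E R b"
    and L: "L = {D. satisfies E R b D} \<union> {{}, E}"
    and D1: "D1 \<in> L" and D2: "D2 \<in> L"
    and sub: "\<And>D. satisfies E R b D \<Longrightarrow> D \<subseteq> E"
  shows "D1 \<inter> D2 \<in> L \<and> D1 \<union> D2 \<in> L"
proof -
  have s1: "D1 \<subseteq> E" "D2 \<subseteq> E" using D1 D2 sub L by auto
  show ?thesis
  proof (cases "satisfies E R b D1 \<and> satisfies E R b D2")
    case True then show ?thesis using reg L unfolding regular_def by auto
  next
    case False
    then have "D1 = {} \<or> D1 = E \<or> D2 = {} \<or> D2 = E" using D1 D2 L by auto
    then show ?thesis using D1 D2 s1 by (auto simp: Int_absorb1 Int_absorb2 Un_absorb1 Un_absorb2)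
  qed
qed

theorem theorem16:
  fixes E :: "'a set" and R S :: "('a \<times> 'a) set" and P :: "'p set"
    and proc :: "'a \<Rightarrow> 'p" and po msg :: "('a \<times> 'a) set"
    and init fin :: "'p \<Rightarrow> 'a" and b :: "'a set \<Rightarrow> bool" and C :: "'a set"
  assumes "computation E R P proc po msg init fin"
    and "regular E R b"
    and "is_slice E R b S"
    and "consistent_cut E R C"
    and "nontrivial_cut E C"
  shows "\<not> b C \<longleftrightarrow>
    (\<exists>e f. e \<in> E \<and> f \<in> E \<and> (e, f) \<notin> R\<^sup>+ \<and> (e, f) \<in> S\<^sup>+ \<and> f \<in> C \<and> e \<notin> C)"
proof
  have finE: "finite E" using assms(1) unfolding computation_def by auto
  have CE: "C \<subseteq> E" using assms(4) unfolding consistent_cut_def by auto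
  have Rclosed: "\<And>u v. (u, v) \<in> R\<^sup>+ \<Longrightarrow> v \<in> C \<Longrightarrow> u \<in> C"
  proof -
    fix u v assume "(u, v) \<in> R\<^sup>+" "v \<in> C"
    then show "u \<in> C"
      by (induction rule: trancl_induct) (use assms(4) in \<open>auto simp: consistent_cut_def\<close>)
  qed
  define L where "L = {D. satisfies E R b D} \<union> {{}, E}"
  have sub: "\<And>D. satisfies E R b D \<Longrightarrow> D \<subseteq> E" by (auto simp: satisfies_def consistent_cut_def)
  have LE: "\<And>D. D \<in> L \<Longrightarrow> D \<subseteq> E" using sub L_def by auto
  have finL: "finite L" using finE LE by (metis Pow_iff finite_Pow_iff rev_finite_subset subsetI)
  have cl: "\<And>D1 D2. D1 \<in> L \<Longrightarrow> D2 \<in> L \<Longrightarrow> D1 \<inter> D2 \<in> L \<and> D1 \<union> D2 \<in> L"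
    using L_closed[OF assms(2) L_def _ _ sub] by blast
  have Un_L: "\<And>F. finite F \<Longrightarrow> F \<subseteq> L \<Longrightarrow> \<Union>F \<in> L"
  proof -
    fix F :: "'a set set" assume "finite F" "F \<subseteq> L"
    then show "\<Union>F \<in> L"
    proof (induction F rule: finite_induct)
      case empty then show ?case by (auto simp: L_def)
    next
      case (insert x F)
      then have "\<Union>F \<in> L" "x \<in> L" by auto
      then have "x \<union> \<Union>F \<in> L" using cl by blast
      then show ?case by simp
    qed
  qed
  have Int_L: "\<And>F. finite F \<Longrightarrow> F \<subseteq> L \<Longrightarrow> \<Inter>(insert E F) \<in> L"
  proof -
    fix F :: "'a set set" assume "finite F" "F \<subseteq> L"
    then show "\<Inter>(insert E F) \<in> L"
    proof (induction F rule: finite_induct)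
      case empty then show ?case by (auto simp: L_def)
    next
      case (insert x F)
      then have "\<Inter>(insert E F) \<in> L" "x \<in> L" by auto
      then have "x \<inter> \<Inter>(insert E F) \<in> L" using cl by blast
      moreover have "\<Inter>(insert E (insert x F)) = x \<inter> \<Inter>(insert E F)" by auto
      ultimately show ?case by simp
    qed
  qed
  define G where "G = {(e, f). e \<in> E \<and> f \<in> E \<and> (\<forall>D\<in>L. f \<in> D \<longrightarrow> e \<in> D)}"
  have GE: "G \<subseteq> E \<times> E" by (auto simp: G_def)
  have L_sub_G: "L \<subseteq> cuts E G" using LE by (auto simp: cuts_def consistent_cut_def G_def)
  have G_sub_L: "cuts E G \<subseteq> L"
  proof
    fix D assume "D \<in> cuts E G"
    then have DE: "D \<subseteq> E" and Dc: "\<And>u v. (u, v) \<in> G \<Longrightarrow> v \<in> D \<Longrightarrow> u \<in> D"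
      by (auto simp: cuts_def consistent_cut_def)
    define J where "J f = \<Inter>(insert E {D' \<in> L. f \<in> D'})" for f
    have JL: "J f \<in> L" for f unfolding J_def by (rule Int_L) (use finL in auto)
    have fJ: "f \<in> J f" if "f \<in> D" for f using that DE by (auto simp: J_def)
    have JD: "J f \<subseteq> D" if "f \<in> D" for f
    proof
      fix e assume "e \<in> J f"
      then have "(e, f) \<in> G" using that DE by (auto simp: J_def G_def)
      then show "e \<in> D" using Dc that by blast
    qed
    have DJ: "D = \<Union>(J ` D)" using fJ JD by blast
    have finD: "finite D" using finE DE finite_subset by blast
    have "finite (J ` D)" using finD by simp
    moreover have "J ` D \<subseteq> L" using JL by blast
    ultimately have "\<Union>(J ` D) \<in> L" by (rule Un_L)
    then show "D \<in> L" by (subst DJ)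
  qed
  have sl: "S \<subseteq> E \<times> E" "\<And>D. satisfies E R b D \<Longrightarrow> consistent_cut E S D"
    "card (cuts E S) \<le> card (cuts E G)"
  proof -
    have A: "S \<subseteq> E \<times> E \<and> (\<forall>C. satisfies E R b C \<longrightarrow> consistent_cut E S C) \<and>
     (\<forall>G. G \<subseteq> E \<times> E \<longrightarrow> (\<forall>C. satisfies E R b C \<longrightarrow> consistent_cut E G C) \<longrightarrow>
        card (cuts E S) \<le> card (cuts E G))" using assms(3) unfolding is_slice_def .
    have B: "\<forall>C. satisfies E R b C \<longrightarrow> consistent_cut E G C"
      using L_sub_G unfolding L_def cuts_def by blast
    show "S \<subseteq> E \<times> E" using A by blast
    show "\<And>D. satisfies E R b D \<Longrightarrow> consistent_cut E S D" using A by blast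
    show "card (cuts E S) \<le> card (cuts E G)" using A GE B by blast
  qed
  have L_sub_S: "L \<subseteq> cuts E S"
  proof
    fix D assume "D \<in> L"
    then have "satisfies E R b D \<or> D = {} \<or> D = E" by (auto simp: L_def)
    then show "D \<in> cuts E S"
    proof (elim disjE)
      assume "satisfies E R b D" then show ?thesis using sl(2) by (simp add: cuts_def)
    qed (use sl(1) in \<open>auto simp: cuts_def consistent_cut_def\<close>)
  qed
  have finS: "finite (cuts E S)"
    using finE by (auto simp: cuts_def consistent_cut_def intro: rev_finite_subset[of "Pow E"])
  have "cuts E G = L" using L_sub_G G_sub_L by blast
  then have c1: "card (cuts E S) \<le> card L" using sl(3) by metis
  have c2: "card L \<le> card (cuts E S)" using card_mono[OF finS L_sub_S] .
  have "card L = card (cuts E S)" using c1 c2 by (rule antisym[rotated])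
  then have "L = cuts E S" by (rule card_subset_eq[OF finS L_sub_S])
  assume nb: "\<not> b C"
  have "C \<notin> L" using nb assms(5) by (auto simp: L_def satisfies_def nontrivial_cut_def)
  then have "\<not> consistent_cut E S C" using \<open>L = cuts E S\<close> by (auto simp: cuts_def)
  then obtain u v where uv: "(u, v) \<in> S" "v \<in> C" "u \<notin> C" using CE by (auto simp: consistent_cut_def)
  then have "(u, v) \<notin> R\<^sup>+" using Rclosed by blast
  then show "\<exists>e f. e \<in> E \<and> f \<in> E \<and> (e, f) \<notin> R\<^sup>+ \<and> (e, f) \<in> S\<^sup>+ \<and> f \<in> C \<and> e \<notin> C"
    using uv sl(1) by blast
next
  assume "\<exists>e f. e \<in> E \<and> f \<in> E \<and> (e, f) \<notin> R\<^sup>+ \<and> (e, f) \<in> S\<^sup>+ \<and> f \<in> C \<and> e \<notin> C"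
  then obtain e f where ef: "(e, f) \<in> S\<^sup>+" "f \<in> C" "e \<notin> C" by blast
  show "\<not> b C"
  proof
    assume "b C"
    then have "consistent_cut E S C" using assms(3,4,5) by (auto simp: is_slice_def satisfies_def)
    have "e \<in> C" using ef(1,2)
      by (induction rule: trancl_induct) (use \<open>consistent_cut E S C\<close> in \<open>auto simp: consistent_cut_def\<close>)
    then show False using ef(3) by simp
  qed
qed

end
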